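(* The class of data languages accepted by SAFA is closed under union: for any SAFA $M_1$ and $M_2$ over the same $\Sigma\times D$, there is a SAFA $M_3$ with $L(M_3)=L(M_1)\cup L(M_2)$.
   Context: $D$ is a fixed countably infinite set of data values; for a finite alphabet $\Sigma$, data words are elements of $(\Sigma\times D)^*$. A set augmented finite automaton (SAFA) is a tuple $M=(Q,\Sigma\times D,q_0,F,H,\delta)$: $Q$ finite set of states, $q_0\in Q$ initial, $F\subseteq Q$ final, $H=\{h_1,\dots,h_m\}$ a finite collection of (names of) sets of data values, $\delta\subseteq Q\times\Sigma\times C\times OP\times Q$ with $C=\{p(h_i),\,!p(h_i): h_i\in H\}$, $OP=\{-\}\cup\{\mathsf{ins}(h_i):h_i\in H\}$. Configurations are $(q,\langle S_1,\dots,S_m\rangle)$ with $S_i\subseteq D$ finite; initially state $q_0$ and all sets empty. On reading $(a,d)$, a transition $(q,a,\alpha,op,q')$ from the current state may be taken if $\alpha=p(h_i)$ and $d\in S_i$, or $\alpha=\,!p(h_i)$ and $d\notin S_i$; then the state becomes $q'$ and if $op=\mathsf{ins}(h_j)$ the value $d$ is added to $S_j$ ($op=-$ changes nothing). A word is accepted if some run reads it entirely and ends in $F$; $L(M)$ is the set of accepted words. *)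

theory Defs
  imports Main "HOL-Library.Countable_Set"
begin

text \<open>States and names of the sets h_i are
  represented by natural numbers; the data domain is a type 'd (countably infinite
  in the theorem); the finite alphabet Sig is a finite set of letters of type 'a.\<close>

datatype cond = P nat | NP nat
datatype oper = Nop | Ins nat

record 'a safa =
  states :: "nat set"
  init   :: nat
  final  :: "nat set"
  hnames :: "nat set"
  trans  :: "(nat \<times> 'a \<times> cond \<times> oper \<times> nat) set"

fun cond_name :: "cond \<Rightarrow> nat" where
  "cond_name (P i) = i" | "cond_name (NP i) = i"

fun oper_ok :: "nat set \<Rightarrow> oper \<Rightarrow> bool" where
  "oper_ok H Nop = True" | "oper_ok H (Ins i) = (i \<in> H)"

definition is_safa :: "'a set \<Rightarrow> 'a safa \<Rightarrow> bool" where
  "is_safa Sig M \<longleftrightarrow>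
     finite (states M) \<and> init M \<in> states M \<and> final M \<subseteq> states M \<and>
     finite (hnames M) \<and>
     (\<forall>(q, a, c, op, q') \<in> trans M.
        q \<in> states M \<and> a \<in> Sig \<and> cond_name c \<in> hnames M \<and> oper_ok (hnames M) op
        \<and> q' \<in> states M)"

fun sat :: "cond \<Rightarrow> 'd \<Rightarrow> (nat \<Rightarrow> 'd set) \<Rightarrow> bool" where
  "sat (P i) d S = (d \<in> S i)"
| "sat (NP i) d S = (d \<notin> S i)"

fun apply_op :: "oper \<Rightarrow> 'd \<Rightarrow> (nat \<Rightarrow> 'd set) \<Rightarrow> (nat \<Rightarrow> 'd set)" where
  "apply_op Nop d S = S"
| "apply_op (Ins j) d S = S(j := insert d (S j))"

inductive accepts_from :: "'a safa \<Rightarrow> nat \<Rightarrow> (nat \<Rightarrow> 'd set) \<Rightarrow> ('a \<times> 'd) list \<Rightarrow> bool"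
  for M where
  acc_nil: "q \<in> final M \<Longrightarrow> accepts_from M q S []"
| acc_step: "(q, a, c, op, q') \<in> trans M \<Longrightarrow> sat c d S \<Longrightarrow>
     accepts_from M q' (apply_op op d S) w \<Longrightarrow> accepts_from M q S ((a, d) # w)"

definition lang :: "'a safa \<Rightarrow> ('a \<times> 'd) list set" where
  "lang M = {w. accepts_from M (init M) (\<lambda>_. {}) w}"

end

theory Submission
  imports Defs
begin

lemma fwd:
  assumes "\<And>q a c op q'. (q,a,c,op,q') \<in> trans M \<Longrightarrow> (f q,a,c,op,f q') \<in> trans N"
    and "\<And>q. q \<in> final M \<Longrightarrow> f q \<in> final N"
  shows "accepts_from M q S w \<Longrightarrow> accepts_from N (f q) S w"
proof (induction rule: accepts_from.induct)
  case (acc_nil q S) then show ?case using assms(2) by (auto intro: accepts_from.acc_nil)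
next
  case (acc_step q a c op q' d S w)
  show ?case by (rule accepts_from.acc_step[OF assms(1)[OF acc_step(1)] acc_step(2) acc_step.IH])
qed

lemma bwd:
  assumes "\<And>q a c op r. (f q,a,c,op,r) \<in> trans N \<Longrightarrow> \<exists>q'. r = f q' \<and> (q,a,c,op,q') \<in> trans M"
    and "\<And>q. f q \<in> final N \<Longrightarrow> q \<in> final M"
  shows "accepts_from N r S w \<Longrightarrow> r = f q \<Longrightarrow> accepts_from M q S w"
proof (induction arbitrary: q rule: accepts_from.induct)
  case (acc_nil q S) then show ?case using assms(2) by (auto intro: accepts_from.acc_nil)
next
  case (acc_step r a c op r' d S w q)
  then obtain q' where "r' = f q'" "(q,a,c,op,q') \<in> trans M" using assms(1) by blast
  then show ?case using acc_step by (auto intro: accepts_from.acc_step)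
qed

definition f1 :: "nat \<Rightarrow> nat" where "f1 q = 2*q+1"
definition f2 :: "nat \<Rightarrow> nat" where "f2 q = 2*q+2"

definition U :: "'a safa \<Rightarrow> 'a safa \<Rightarrow> 'a safa" where
  "U M1 M2 = \<lparr> states = {0} \<union> f1 ` states M1 \<union> f2 ` states M2,
     init = 0,
     final = f1 ` final M1 \<union> f2 ` final M2 \<union>
        (if init M1 \<in> final M1 \<or> init M2 \<in> final M2 then {0} else {}),
     hnames = hnames M1 \<union> hnames M2,
     trans = {(f1 q,a,c,op,f1 q') | q a c op q'. (q,a,c,op,q') \<in> trans M1}
       \<union> {(f2 q,a,c,op,f2 q') | q a c op q'. (q,a,c,op,q') \<in> trans M2}
       \<union> {(0,a,c,op,f1 q') | a c op q'. (init M1,a,c,op,q') \<in> trans M1}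
       \<union> {(0,a,c,op,f2 q') | a c op q'. (init M2,a,c,op,q') \<in> trans M2} \<rparr>"

lemma U_init: "init (U M1 M2) = 0" by (simp add: U_def)

lemma oper_ok_mono: "oper_ok H op \<Longrightarrow> H \<subseteq> H' \<Longrightarrow> oper_ok H' op"
  by (cases op) auto

lemma U1: "accepts_from M1 q S w \<longleftrightarrow> accepts_from (U M1 M2) (f1 q) S w"
proof
  assume "accepts_from M1 q S w"
  then show "accepts_from (U M1 M2) (f1 q) S w"
    by (rule fwd[rotated 2]) (auto simp: U_def)
next
  assume "accepts_from (U M1 M2) (f1 q) S w"
  then show "accepts_from M1 q S w"
    apply (rule bwd[of f1, rotated 2, OF _ refl])
    apply (auto simp: U_def f1_def f2_def split: if_splits)
    apply presburger+
    done
qed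

lemma U2: "accepts_from M2 q S w \<longleftrightarrow> accepts_from (U M1 M2) (f2 q) S w"
proof
  assume "accepts_from M2 q S w"
  then show "accepts_from (U M1 M2) (f2 q) S w"
    by (rule fwd[rotated 2]) (auto simp: U_def)
next
  assume "accepts_from (U M1 M2) (f2 q) S w"
  then show "accepts_from M2 q S w"
    apply (rule bwd[of f2, rotated 2, OF _ refl])
    apply (auto simp: U_def f1_def f2_def split: if_splits)
    apply presburger+
    done
qed

lemma U_trans: "(p,a,c,op,r) \<in> trans (U M1 M2) \<longleftrightarrow>
  (\<exists>q q'. p = f1 q \<and> r = f1 q' \<and> (q,a,c,op,q') \<in> trans M1) \<or>
  (\<exists>q q'. p = f2 q \<and> r = f2 q' \<and> (q,a,c,op,q') \<in> trans M2) \<or>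
  (\<exists>q'. p = 0 \<and> r = f1 q' \<and> (init M1,a,c,op,q') \<in> trans M1) \<or>
  (\<exists>q'. p = 0 \<and> r = f2 q' \<and> (init M2,a,c,op,q') \<in> trans M2)"
  by (simp add: U_def)

lemma U_safa: assumes A: "is_safa Sig M1" and B: "is_safa Sig M2" shows "is_safa Sig (U M1 M2)"
proof -
  have X: "finite (states (U M1 M2)) \<and> init (U M1 M2) \<in> states (U M1 M2) \<and> final (U M1 M2) \<subseteq> states (U M1 M2) \<and>
     finite (hnames (U M1 M2))"
    using A B unfolding is_safa_def U_def by auto
  have "q \<in> states (U M1 M2) \<and> a \<in> Sig \<and> cond_name c \<in> hnames (U M1 M2) \<and> oper_ok (hnames (U M1 M2)) op
        \<and> q' \<in> states (U M1 M2)" if t: "(q, a, c, op, q') \<in> trans (U M1 M2)" for q a c op q'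
  proof -
    have h: "hnames (U M1 M2) = hnames M1 \<union> hnames M2" "states (U M1 M2) = {0} \<union> f1 ` states M1 \<union> f2 ` states M2"
      by (simp_all add: U_def)
    from t show ?thesis unfolding U_trans h
      using A B unfolding is_safa_def
      by (elim disjE exE conjE) (fastforce intro: oper_ok_mono)+
  qed
  then show ?thesis using X unfolding is_safa_def by blast
qed

lemma U0: "accepts_from (U M1 M2) 0 S w \<longleftrightarrow> accepts_from M1 (init M1) S w \<or> accepts_from M2 (init M2) S w"
proof (cases w)
  case Nil
  have "accepts_from (U M1 M2) 0 S [] \<longleftrightarrow> 0 \<in> final (U M1 M2)"
    by (auto elim: accepts_from.cases intro: accepts_from.acc_nil)
  moreover have "accepts_from M1 (init M1) S [] \<longleftrightarrow> init M1 \<in> final M1"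
    by (auto elim: accepts_from.cases intro: accepts_from.acc_nil)
  moreover have "accepts_from M2 (init M2) S [] \<longleftrightarrow> init M2 \<in> final M2"
    by (auto elim: accepts_from.cases intro: accepts_from.acc_nil)
  moreover have "0 \<in> final (U M1 M2) \<longleftrightarrow> init M1 \<in> final M1 \<or> init M2 \<in> final M2"
    by (auto simp: U_def f1_def f2_def)
  ultimately show ?thesis using Nil by simp
next
  case (Cons x w')
  obtain a d where x: "x = (a,d)" by force
  show ?thesis
  proof
    assume "accepts_from (U M1 M2) 0 S w"
    then obtain c op r where t: "(0,a,c,op,r) \<in> trans (U M1 M2)" and s: "sat c d S"
      and r: "accepts_from (U M1 M2) r (apply_op op d S) w'"
      unfolding Cons x by (cases rule: accepts_from.cases) auto
    have nz: "f1 q \<noteq> 0" "f2 q \<noteq> 0" for q by (auto simp: f1_def f2_def)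
    from t nz consider q' where "r = f1 q'" "(init M1,a,c,op,q') \<in> trans M1"
      | q' where "r = f2 q'" "(init M2,a,c,op,q') \<in> trans M2"
      unfolding U_trans by metis
    then show "accepts_from M1 (init M1) S w \<or> accepts_from M2 (init M2) S w"
    proof cases
      case 1
      then have "accepts_from M1 q' (apply_op op d S) w'" using r U1 by metis
      then show ?thesis using 1 s unfolding Cons x by (blast intro: accepts_from.acc_step)
    next
      case 2
      then have "accepts_from M2 q' (apply_op op d S) w'" using r U2 by metis
      then show ?thesis using 2 s unfolding Cons x by (blast intro: accepts_from.acc_step)
    qed
  next
    assume "accepts_from M1 (init M1) S w \<or> accepts_from M2 (init M2) S w"
    then show "accepts_from (U M1 M2) 0 S w"
    proof
      assume "accepts_from M1 (init M1) S w"
      then obtain c op r where t: "(init M1,a,c,op,r) \<in> trans M1" and s: "sat c d S"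
        and r: "accepts_from M1 r (apply_op op d S) w'"
        unfolding Cons x by (cases rule: accepts_from.cases) auto
      have "(0,a,c,op,f1 r) \<in> trans (U M1 M2)" using t unfolding U_trans by blast
      moreover have "accepts_from (U M1 M2) (f1 r) (apply_op op d S) w'" using r U1 by metis
      ultimately show ?thesis using s unfolding Cons x by (blast intro: accepts_from.acc_step)
    next
      assume "accepts_from M2 (init M2) S w"
      then obtain c op r where t: "(init M2,a,c,op,r) \<in> trans M2" and s: "sat c d S"
        and r: "accepts_from M2 r (apply_op op d S) w'"
        unfolding Cons x by (cases rule: accepts_from.cases) auto
      have "(0,a,c,op,f2 r) \<in> trans (U M1 M2)" using t unfolding U_trans by blast
      moreover have "accepts_from (U M1 M2) (f2 r) (apply_op op d S) w'" using r U2 by metis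
      ultimately show ?thesis using s unfolding Cons x by (blast intro: accepts_from.acc_step)
    qed
  qed
qed

theorem lemma5:
  fixes Sig :: "'a set" and M1 M2 :: "'a safa"
  assumes "finite Sig"
    and "infinite (UNIV :: 'd set)" and "countable (UNIV :: 'd set)"
    and "is_safa Sig M1" and "is_safa Sig M2"
  shows "\<exists>M3. is_safa Sig M3 \<and>
           (lang M3 :: ('a \<times> 'd) list set) = lang M1 \<union> lang M2"
proof (intro exI conjI)
  show "is_safa Sig (U M1 M2)" using assms U_safa by blast
  show "(lang (U M1 M2) :: ('a \<times> 'd) list set) = lang M1 \<union> lang M2"
    unfolding lang_def using U0[of M1 M2] by (auto simp: U_init)
qed

end
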